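(* Let $L$ be a finite-dimensional pure, nonnilpotent, solvable Lie algebra over $\mathbb{C}$ of breadth $2$ such that $\dim[L,L]=2$ and $\dim L^k=2$ for all integers $k\geq 2$. Then there exists an abelian subalgebra $A$ of $L$ such that $L=A\ltimes[L,L]$ (i.e. $L=A\oplus[L,L]$ as vector spaces, with $[L,L]$ an ideal).
   Context: For $x\in L$, $b(x)=\mathrm{rank}(\mathrm{ad}_x)$ and the breadth of $L$ is $b(L)=\max\{b(x)\mid x\in L\}$. $L$ is pure if it has no abelian ideal as a direct summand; equivalently $Z(L)\subseteq[L,L]$, where $Z(L)$ is the center. The lower central series is indexed by $L^0=L$, $L^1=[L,L]$, $L^k=[L,L^{k-1}]$ for $k\geq 2$. *)

theory Defs
  imports Complex_Main
begin

text \<open>The whole type is L.\<close>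

definition lie_algebra :: "(complex \<Rightarrow> 'a::ab_group_add \<Rightarrow> 'a) \<Rightarrow> ('a \<Rightarrow> 'a \<Rightarrow> 'a) \<Rightarrow> bool" where
  "lie_algebra sc br \<longleftrightarrow>
     vector_space sc \<and>
     (\<forall>x y z. br (x + y) z = br x z + br y z) \<and>
     (\<forall>x y z. br x (y + z) = br x y + br x z) \<and>
     (\<forall>c x y. br (sc c x) y = sc c (br x y)) \<and>
     (\<forall>c x y. br x (sc c y) = sc c (br x y)) \<and>
     (\<forall>x. br x x = 0) \<and>
     (\<forall>x y z. br x (br y z) + br y (br z x) + br z (br x y) = 0)"

definition finite_dim_lie :: "(complex \<Rightarrow> 'a::ab_group_add \<Rightarrow> 'a) \<Rightarrow> bool" where
  "finite_dim_lie sc \<longleftrightarrow> (\<exists>S. finite S \<and> module.span sc S = UNIV)"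

fun lcs :: "(complex \<Rightarrow> 'a::ab_group_add \<Rightarrow> 'a) \<Rightarrow> ('a \<Rightarrow> 'a \<Rightarrow> 'a) \<Rightarrow> nat \<Rightarrow> 'a set" where
  "lcs sc br 0 = UNIV"
| "lcs sc br (Suc k) = module.span sc {br x y | x y. y \<in> lcs sc br k}"

fun derived_series :: "(complex \<Rightarrow> 'a::ab_group_add \<Rightarrow> 'a) \<Rightarrow> ('a \<Rightarrow> 'a \<Rightarrow> 'a) \<Rightarrow> nat \<Rightarrow> 'a set" where
  "derived_series sc br 0 = UNIV"
| "derived_series sc br (Suc k) =
     module.span sc {br x y | x y. x \<in> derived_series sc br k \<and> y \<in> derived_series sc br k}"

definition derived_algebra :: "(complex \<Rightarrow> 'a::ab_group_add \<Rightarrow> 'a) \<Rightarrow> ('a \<Rightarrow> 'a \<Rightarrow> 'a) \<Rightarrow> 'a set" where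
  "derived_algebra sc br = module.span sc {br x y | x y. True}"

definition lie_solvable where
  "lie_solvable sc br \<longleftrightarrow> (\<exists>k. derived_series sc br k = {0})"

definition lie_nilpotent where
  "lie_nilpotent sc br \<longleftrightarrow> (\<exists>k. lcs sc br k = {0})"

definition lie_center :: "('a \<Rightarrow> 'a \<Rightarrow> 'a::zero) \<Rightarrow> 'a set" where
  "lie_center br = {z. \<forall>x. br z x = 0}"

text \<open>Pure: Z(L) contained in [L,L] (equivalent to having no abelian direct summand ideal).\<close>
definition lie_pure where
  "lie_pure sc br \<longleftrightarrow> lie_center br \<subseteq> derived_algebra sc br"

definition elem_breadth :: "(complex \<Rightarrow> 'a::ab_group_add \<Rightarrow> 'a) \<Rightarrow> ('a \<Rightarrow> 'a \<Rightarrow> 'a) \<Rightarrow> 'a \<Rightarrow> nat" where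
  "elem_breadth sc br x = vector_space.dim sc (range (br x))"

definition lie_breadth :: "(complex \<Rightarrow> 'a::ab_group_add \<Rightarrow> 'a) \<Rightarrow> ('a \<Rightarrow> 'a \<Rightarrow> 'a) \<Rightarrow> nat" where
  "lie_breadth sc br = Max (range (elem_breadth sc br))"

end

theory Submission imports Defs begin

locale lie_ctx = vector_space sc
  for sc :: "complex \<Rightarrow> 'a::ab_group_add \<Rightarrow> 'a" (infixr "*s" 75) +
  fixes br :: "'a \<Rightarrow> 'a \<Rightarrow> 'a"
  assumes add_l: "br (x + y) z = br x z + br y z"
  and add_r: "br x (y + z) = br x y + br x z"
  and sc_l: "br (c *s x) y = c *s (br x y)"
  and sc_r: "br x (c *s y) = c *s (br x y)"
  and alt: "br x x = 0"
  and jac: "br x (br y z) + br y (br z x) + br z (br x y) = 0"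
  and dimS: "dim (span {br x y | x y. True}) = 2"
  and dimS2: "dim (span {br x y | x y. y \<in> span {br x y | x y. True}}) = 2"
begin

abbreviation "S \<equiv> span {br x y | x y. True}"

lemma br0l[simp]: "br 0 x = 0"
  by (metis add_l add_cancel_right_right)
lemma br0r[simp]: "br x 0 = 0"
  by (metis add_r add_cancel_right_right)
lemma anti: "br y x = - br x y"
proof -
  have "br x x + br y x + (br x y + br y y) = 0" using alt[of "x+y"] by (simp only: add_l add_r)
  then have "br x y + br y x = 0" by (simp add: alt add.commute)
  then show ?thesis by (metis neg_eq_iff_add_eq_0)
qed
lemma deriv: "br y (br a b) = br (br y a) b + br a (br y b)"
proof -
  have "br y (br a b) + br a (br b y) + br b (br y a) = 0" by (rule jac)
  moreover have "br a (br b y) = - br a (br y b)"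
    by (metis anti add_r add.right_inverse br0r neg_eq_iff_add_eq_0)
  moreover have "br b (br y a) = - br (br y a) b" by (rule anti)
  ultimately show ?thesis by (simp add: algebra_simps eq_neg_iff_add_eq_0)
qed
lemma brS: "br x y \<in> S" by (rule span_base) auto

lemma in_span2: "s \<in> span {u, v} \<Longrightarrow> \<exists>a b. s = a *s u + b *s v"
  by (auto simp: span_insert span_singleton) (metis diff_add_cancel add.commute)

lemma L2:
  assumes u: "u \<in> S" and v: "v \<in> S"
    and ind: "\<And>a b. a *s u + b *s v = 0 \<Longrightarrow> a = 0 \<and> b = 0"
    and s: "s \<in> S"
  shows "\<exists>a b. s = a *s u + b *s v"
proof -
  obtain B where B: "B \<subseteq> S" "independent B" "S \<subseteq> span B" "card B = dim S"
    by (rule basis_exists)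
  note B = B(1-3) B(4)[unfolded dimS]
  have fB: "finite B" using B(4) by (metis card.infinite zero_neq_numeral)
  have v0: "v \<noteq> 0" using ind[of 0 1] by auto
  have uv: "u \<noteq> v" using ind[of 1 "-1"] by auto
  have usp: "u \<notin> span {v}"
  proof
    assume "u \<in> span {v}" then obtain k where "u = k *s v" by (auto simp: span_singleton)
    then have "1 *s u + (-k) *s v = 0" by simp
    then show False using ind[of 1 "-k"] by simp
  qed
  have i1: "independent {v}" using v0 independent_insert[of v "{}"] by simp
  have i2: "independent {u, v}"
    using usp uv i1 independent_insert[of u "{v}"] by simp
  show ?thesis
  proof (cases "s \<in> span {u, v}")
    case True then show ?thesis by (rule in_span2)
  next
    case False
    then have "s \<noteq> u" "s \<noteq> v" by (auto intro: span_base)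
    then have i3: "independent {s, u, v}" using i2 False independent_insert[of s "{u,v}"] by simp
    have "{s, u, v} \<subseteq> span B" using u v s B(3) by auto
    from independent_span_bound[OF fB i3 this] have "card {s,u,v} \<le> 2" using B(4) by simp
    moreover have "card {s,u,v} = 3" using \<open>s \<noteq> u\<close> \<open>s \<noteq> v\<close> uv by simp
    ultimately show ?thesis by simp
  qed
qed

lemma C1:
  assumes "\<And>z s. s \<in> S \<Longrightarrow> br z s \<in> span {k}"
  shows False
proof -
  have "{br x y | x y. y \<in> S} \<subseteq> span {k}" using assms by auto
  then have "span {br x y | x y. y \<in> S} \<subseteq> span {k}" by (simp add: span_minimal)
  then have "dim (span {br x y | x y. y \<in> S}) \<le> card {k}" by (intro dim_le_card) auto
  then show False using dimS2 by simp
qed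

lemma indep2:
  assumes "independent {u, v}" "u \<noteq> v" "a *s u + b *s v = 0"
  shows "a = 0 \<and> b = 0"
proof -
  have v0: "v \<noteq> 0" and usp: "u \<notin> span {v}" using assms(1,2) by (auto simp: independent_insert)
  have "a = 0"
  proof (rule ccontr)
    assume a: "a \<noteq> 0"
    have "a *s u = (-b) *s v" using assms(3) by (simp add: eq_neg_iff_add_eq_0 scale_minus_left)
    then have "(1/a) *s (a *s u) = (1/a) *s ((-b) *s v)" by simp
    then have "u = ((1/a) * (-b)) *s v" using a by simp
    then show False using usp by (metis span_base span_scale singletonI)
  qed
  then show ?thesis using assms(3) v0 by simp
qed

lemma basisS: obtains e1 e2 where "e1 \<in> S" "e2 \<in> S"
  "\<And>a b. a *s e1 + b *s e2 = 0 \<Longrightarrow> a = 0 \<and> b = 0"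
proof -
  obtain B where B: "B \<subseteq> S" "independent B" "S \<subseteq> span B" "card B = dim S"
    by (rule basis_exists)
  note B = B(1-3) B(4)[unfolded dimS]
  then obtain e1 e2 where "B = {e1, e2}" "e1 \<noteq> e2" by (meson card_2_iff)
  then show ?thesis using that B indep2 by auto
qed

lemma S_abelian: assumes "s \<in> S" "t \<in> S" shows "br s t = 0"
proof -
  obtain e1 e2 where e: "e1 \<in> S" "e2 \<in> S" "\<And>a b. a *s e1 + b *s e2 = 0 \<Longrightarrow> a = 0 \<and> b = 0"
    using basisS by blast
  define c where "c = br e1 e2"
  have G: "\<exists>r. br s t = r *s c" if st: "s \<in> S" "t \<in> S" for s t
  proof -
    obtain a1 b1 where 1: "s = a1 *s e1 + b1 *s e2" using L2[OF e st(1)] by blast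
    obtain a2 b2 where 2: "t = a2 *s e1 + b2 *s e2" using L2[OF e st(2)] by blast
    have "br s t = (a1 * b2 - b1 * a2) *s c"
      unfolding 1 2 c_def
      by (simp add: add_l add_r sc_l sc_r alt anti[of e2 e1] scale_left_diff_distrib scale_minus_right mult.commute)
    then show ?thesis by blast
  qed
  show ?thesis
  proof (cases "c = 0")
    case True then show ?thesis using G[OF assms] by auto
  next
    case False
    have cS: "c \<in> S" unfolding c_def by (rule brS)
    obtain \<alpha> \<beta> where cab: "c = \<alpha> *s e1 + \<beta> *s e2" using L2[OF e cS] by blast
    have X1: "br e1 (\<alpha> *s e1 + \<beta> *s e2) = \<beta> *s br e1 e2" by (simp add: add_r sc_r alt)
    have h1: "br e1 c = \<beta> *s c" by (metis X1 cab c_def)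
    have X2: "br e2 (\<alpha> *s e1 + \<beta> *s e2) = (-\<alpha>) *s br e1 e2"
      by (simp add: add_r sc_r alt anti[of e2 e1] scale_minus_right scale_minus_left)
    have h2: "br e2 c = (-\<alpha>) *s c" by (metis X2 cab c_def)
    obtain v where vS: "v \<in> S" and vc: "br v c = c"
    proof (cases "\<beta> = 0")
      case True
      then have "\<alpha> \<noteq> 0" using False cab by auto
      have "br ((-1/\<alpha>) *s e2) c = (-1/\<alpha>) *s ((-\<alpha>) *s c)" by (simp only: sc_l h2)
      also have "\<dots> = c" using \<open>\<alpha> \<noteq> 0\<close> by simp
      finally show ?thesis using that[of "(-1/\<alpha>) *s e2"] e(2) span_scale by blast
    next
      case False
      have "br ((1/\<beta>) *s e1) c = (1/\<beta>) *s (\<beta> *s c)" by (simp only: sc_l h1)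
      also have "\<dots> = c" using False by simp
      finally show ?thesis using that[of "(1/\<beta>) *s e1"] e(1) span_scale by blast
    qed
    have indcv: "a = 0 \<and> b = 0" if "a *s c + b *s v = 0" for a b
    proof -
      have "br v (a *s c + b *s v) = 0" using that by simp
      then have "a *s c = 0" by (simp add: add_r sc_r vc alt)
      then have a: "a = 0" using False by simp
      then have "b *s v = 0" using that by simp
      moreover have "v \<noteq> 0" using vc False by auto
      ultimately show ?thesis using a by simp
    qed
    have "br y s \<in> span {c}" if sS: "s \<in> S" for y s
    proof -
      obtain p where p: "br y c = p *s c"
      proof -
        have "br y c = br (br y e1) e2 + br e1 (br y e2)" unfolding c_def by (rule deriv)
        moreover obtain r1 where "br (br y e1) e2 = r1 *s c" using G[OF brS e(2)] by blast
        moreover obtain r2 where "br e1 (br y e2) = r2 *s c" using G[OF e(1) brS] by blast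
        ultimately have "br y c = (r1 + r2) *s c" by (simp add: scale_left_distrib)
        then show ?thesis by (rule that)
      qed
      obtain \<gamma> \<delta> where yv: "br y v = \<gamma> *s c + \<delta> *s v" using L2[OF cS vS indcv brS] by blast
      have "br y (br v c) = br (br y v) c + br v (br y c)" by (rule deriv)
      then have "p *s c = \<delta> *s c + p *s c"
        by (simp add: vc p yv add_l sc_l sc_r alt)
      then have "\<delta> = 0" using False by simp
      obtain a b where sab: "s = a *s c + b *s v" using L2[OF cS vS indcv sS] by blast
      have "br y s = (a * p + b * \<gamma>) *s c"
        unfolding sab using yv p \<open>\<delta> = 0\<close> by (simp add: add_r sc_r scale_left_distrib)
      then show ?thesis by (metis span_base span_scale singletonI)
    qed
    then show ?thesis using C1 by blast
  qed
qed

lemma comm: assumes "s \<in> S" shows "br z (br y s) = br y (br z s)"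
proof -
  have "br z (br y s) = br (br z y) s + br y (br z s)" by (rule deriv)
  moreover have "br (br z y) s = 0" using S_abelian[OF brS assms] .
  ultimately show ?thesis by simp
qed

lemma br_diff: "br x (y - d) = br x y - br x d"
  by (metis add_r diff_add_cancel eq_diff_eq)

lemma scal_cancel: assumes "x \<noteq> 0" "a *s x = b *s x" shows "a = b"
proof -
  have "(a - b) *s x = 0" using assms(2) by (simp add: scale_left_diff_distrib)
  then show ?thesis using assms(1) by simp
qed

lemma inj_exists: "\<exists>x. \<forall>s\<in>S. br x s = 0 \<longrightarrow> s = 0"
proof (rule ccontr)
  assume "\<not> ?thesis"
  then have H: "\<And>x. \<exists>s\<in>S. br x s = 0 \<and> s \<noteq> 0" by blast
  obtain y0 w0 where w0S: "w0 \<in> S" and m0: "br y0 w0 \<noteq> 0"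
  proof -
    have "\<exists>y0 w0. w0 \<in> S \<and> br y0 w0 \<noteq> 0"
    proof (rule ccontr)
      assume "\<not> ?thesis"
      then have "\<And>z s. s \<in> S \<Longrightarrow> br z s \<in> span {0}" by (auto simp: span_zero)
      then show False by (rule C1)
    qed
    then show ?thesis using that by blast
  qed
  obtain k where kS: "k \<in> S" and k0: "k \<noteq> 0" and yk: "br y0 k = 0" using H[of y0] by blast
  define m where "m = br y0 w0"
  have mS: "m \<in> S" unfolding m_def by (rule brS)
  have m00: "m \<noteq> 0" using m0 m_def by simp
  have ind_kw: "a = 0 \<and> b = 0" if "a *s k + b *s w0 = 0" for a b
  proof -
    have "br y0 (a *s k + b *s w0) = 0" using that by simp
    then have "b *s m = 0" by (simp add: add_r sc_r yk m_def)
    then have b: "b = 0" using m00 by simp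
    then show ?thesis using that k0 by simp
  qed
  have ka: "\<exists>a. br z k = a *s k" for z
  proof -
    obtain \<alpha> \<beta> where ab: "br z k = \<alpha> *s k + \<beta> *s w0" using L2[OF kS w0S ind_kw brS] by blast
    have "br y0 (br z k) = 0" using comm[OF kS, of z y0] yk by simp
    then have "\<beta> *s m = 0" unfolding ab by (simp add: add_r sc_r yk m_def)
    then have "\<beta> = 0" using m00 by simp
    then show ?thesis using ab by auto
  qed
  show False
  proof (cases "\<exists>\<nu>. m = \<nu> *s k")
    case True
    then obtain \<nu> where \<nu>: "m = \<nu> *s k" by blast
    have \<nu>0: "\<nu> \<noteq> 0" using m00 \<nu> by auto
    have zform: "\<exists>a \<gamma>. br z k = a *s k \<and> br z w0 = \<gamma> *s k + a *s w0" for z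
    proof -
      obtain a where a: "br z k = a *s k" using ka by blast
      obtain \<gamma> \<delta> where gd: "br z w0 = \<gamma> *s k + \<delta> *s w0" using L2[OF kS w0S ind_kw brS] by blast
      have "br y0 (br z w0) = br z (br y0 w0)" using comm[OF w0S, of y0 z] by simp
      moreover have "br y0 (br z w0) = (\<delta> * \<nu>) *s k"
        unfolding gd by (simp add: add_r sc_r yk m_def[symmetric] \<nu>)
      moreover have "br z (br y0 w0) = (\<nu> * a) *s k"
        by (simp add: m_def[symmetric] \<nu> sc_r a)
      ultimately have "\<delta> * \<nu> = \<nu> * a" using k0 scal_cancel by metis
      then have "\<delta> = a" using \<nu>0 by (simp add: mult.commute)
      then show ?thesis using a gd by blast
    qed
    show False
    proof (cases "\<exists>z a. br z k = a *s k \<and> a \<noteq> 0")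
      case True
      then obtain z a where za: "br z k = a *s k" "a \<noteq> 0" by blast
      obtain a' \<gamma> where z2: "br z k = a' *s k" "br z w0 = \<gamma> *s k + a' *s w0" using zform by blast
      have "a' = a" using za z2(1) k0 scal_cancel by metis
      obtain s where s: "s \<in> S" "br z s = 0" "s \<noteq> 0" using H by blast
      obtain \<alpha> \<beta> where sab: "s = \<alpha> *s k + \<beta> *s w0" using L2[OF kS w0S ind_kw s(1)] by blast
      have "(\<alpha> * a + \<beta> * \<gamma>) *s k + (\<beta> * a) *s w0 = 0"
        using s(2) unfolding sab by (simp add: add_r sc_r z2 \<open>a' = a\<close> scale_left_distrib algebra_simps)
      then have "\<alpha> * a + \<beta> * \<gamma> = 0" "\<beta> * a = 0" using ind_kw by blast+
      then have "\<beta> = 0" "\<alpha> = 0" using za(2) by auto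
      then show False using sab s(3) by simp
    next
      case False
      have "br z s \<in> span {k}" if sS: "s \<in> S" for z s
      proof -
        obtain a \<gamma> where z2: "br z k = a *s k" "br z w0 = \<gamma> *s k + a *s w0" using zform by blast
        have a0: "a = 0" using False z2(1) by blast
        obtain \<alpha> \<beta> where sab: "s = \<alpha> *s k + \<beta> *s w0" using L2[OF kS w0S ind_kw sS] by blast
        have "br z s = (\<beta> * \<gamma>) *s k" unfolding sab by (simp add: add_r sc_r z2 a0)
        then show ?thesis by (metis span_base span_scale singletonI)
      qed
      then show False by (rule C1)
    qed
  next
    case False
    have ind_km: "a = 0 \<and> b = 0" if "a *s k + b *s m = 0" for a b
    proof -
      have b: "b = 0"
      proof (rule ccontr)
        assume b: "b \<noteq> 0"
        have "b *s m = (-a) *s k" using that by (simp add: eq_neg_iff_add_eq_0 scale_minus_left add.commute)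
        then have "(1/b) *s (b *s m) = (1/b) *s ((-a) *s k)" by simp
        then have "m = ((1/b) * (-a)) *s k" using b by simp
        then show False using False by blast
      qed
      then show ?thesis using that k0 by simp
    qed
    have zm: "\<exists>b. br z m = b *s m" for z
    proof -
      obtain \<gamma> \<delta> where gd: "br z w0 = \<gamma> *s k + \<delta> *s w0" using L2[OF kS w0S ind_kw brS] by blast
      have "br z m = br y0 (br z w0)" unfolding m_def using comm[OF w0S, of z y0] by simp
      also have "\<dots> = \<delta> *s m" unfolding gd by (simp add: add_r sc_r yk m_def)
      finally show ?thesis by blast
    qed
    obtain b0 where b0: "br y0 m = b0 *s m" using zm by blast
    have b00: "b0 \<noteq> 0"
    proof
      assume "b0 = 0"
      obtain \<alpha> \<beta> where "w0 = \<alpha> *s k + \<beta> *s m" using L2[OF kS mS ind_km w0S] by blast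
      then have "br y0 w0 = 0" using b0 \<open>b0 = 0\<close> by (simp add: add_r sc_r yk)
      then show False using m0 by simp
    qed
    show False
    proof (cases "\<exists>z a. br z k = a *s k \<and> a \<noteq> 0")
      case True
      then obtain z a where za: "br z k = a *s k" "a \<noteq> 0" by blast
      obtain b where zb: "br z m = b *s m" using zm by blast
      obtain x a' b' where x: "br x k = a' *s k" "br x m = b' *s m" "a' \<noteq> 0" "b' \<noteq> 0"
      proof (cases "b = 0")
        case True
        have "br (z + y0) k = a *s k" by (simp add: add_l za yk)
        moreover have "br (z + y0) m = b0 *s m" by (simp add: add_l zb b0 True)
        ultimately show ?thesis using that za(2) b00 by blast
      next
        case False
        then show ?thesis using that za zb by blast
      qed
      obtain s where s: "s \<in> S" "br x s = 0" "s \<noteq> 0" using H by blast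
      obtain \<alpha> \<beta> where sab: "s = \<alpha> *s k + \<beta> *s m" using L2[OF kS mS ind_km s(1)] by blast
      have "(\<alpha> * a') *s k + (\<beta> * b') *s m = 0"
        using s(2) unfolding sab by (simp add: add_r sc_r x(1,2))
      then have "\<alpha> * a' = 0" "\<beta> * b' = 0" using ind_km by blast+
      then have "\<alpha> = 0" "\<beta> = 0" using x(3,4) by auto
      then show False using sab s(3) by simp
    next
      case False
      have "br z s \<in> span {m}" if sS: "s \<in> S" for z s
      proof -
        obtain a where a: "br z k = a *s k" using ka by blast
        have a0: "a = 0" using False a by blast
        obtain b where zb: "br z m = b *s m" using zm by blast
        obtain \<alpha> \<beta> where sab: "s = \<alpha> *s k + \<beta> *s m" using L2[OF kS mS ind_km sS] by blast
        have "br z s = (\<beta> * b) *s m" unfolding sab by (simp add: add_r sc_r a a0 zb)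
        then show ?thesis by (metis span_base span_scale singletonI)
      qed
      then show False by (rule C1)
    qed
  qed
qed

end

theorem proposition3p8:
  fixes sc :: "complex \<Rightarrow> 'a::ab_group_add \<Rightarrow> 'a" and br :: "'a \<Rightarrow> 'a \<Rightarrow> 'a"
  assumes "lie_algebra sc br"
    and "finite_dim_lie sc"
    and "lie_pure sc br"
    and "\<not> lie_nilpotent sc br"
    and "lie_solvable sc br"
    and "lie_breadth sc br = 2"
    and "vector_space.dim sc (derived_algebra sc br) = 2"
    and "\<forall>k\<ge>2. vector_space.dim sc (lcs sc br k) = 2"
  shows "\<exists>A. module.subspace sc A
           \<and> (\<forall>x\<in>A. \<forall>y\<in>A. br x y = 0)
           \<and> A \<inter> derived_algebra sc br = {0}
           \<and> {a + d | a d. a \<in> A \<and> d \<in> derived_algebra sc br} = UNIV"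
proof -
  have vs: "vector_space sc" using assms(1) unfolding lie_algebra_def by blast
  have l2: "lcs sc br 2 = module.span sc {br x y | x y. y \<in> module.span sc {br x y | x y. True}}"
    by (simp add: numeral_2_eq_2)
  have d2: "vector_space.dim sc (lcs sc br 2) = 2" using assms(8) by simp
  have "lie_ctx sc br"
    unfolding lie_ctx_def lie_ctx_axioms_def
    using vs assms(1) assms(7) d2 l2 unfolding lie_algebra_def derived_algebra_def by auto
  then interpret L: lie_ctx sc br .
  have DA: "derived_algebra sc br = L.S" unfolding derived_algebra_def by simp
  obtain x where x: "\<And>s. s \<in> L.S \<Longrightarrow> br x s = 0 \<Longrightarrow> s = 0" using L.inj_exists by blast
  define A where "A = {a. br x a = 0}"
  have sub: "module.subspace sc A"
    unfolding A_def L.subspace_def by (simp add: L.add_r L.sc_r)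
  have ab: "\<forall>a\<in>A. \<forall>b\<in>A. br a b = 0"
  proof (intro ballI)
    fix a b assume "a \<in> A" "b \<in> A"
    then have "br x (br a b) = 0" unfolding A_def by (simp add: L.deriv)
    then show "br a b = 0" using x[OF L.brS] by blast
  qed
  have int: "A \<inter> derived_algebra sc br = {0}"
    unfolding DA A_def using x L.span_zero by auto
  obtain e1 e2 where e: "e1 \<in> L.S" "e2 \<in> L.S" "\<And>a b. sc a e1 + sc b e2 = 0 \<Longrightarrow> a = 0 \<and> b = 0"
    using L.basisS by blast
  have indx: "a = 0 \<and> b = 0" if "sc a (br x e1) + sc b (br x e2) = 0" for a b
  proof -
    have "br x (sc a e1 + sc b e2) = 0" using that by (simp add: L.add_r L.sc_r)
    moreover have "sc a e1 + sc b e2 \<in> L.S" using e by (intro L.span_add L.span_scale)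
    ultimately show ?thesis using x e(3) by blast
  qed
  have sum: "{a + d | a d. a \<in> A \<and> d \<in> derived_algebra sc br} = UNIV"
  proof (intro set_eqI iffI)
    fix y :: 'a
    obtain a b where ab: "br x y = sc a (br x e1) + sc b (br x e2)"
      using L.L2[OF L.brS L.brS indx L.brS] by blast
    define d where "d = sc a e1 + sc b e2"
    have dS: "d \<in> L.S" unfolding d_def using e by (intro L.span_add L.span_scale)
    have "br x d = br x y" unfolding d_def ab by (simp add: L.add_r L.sc_r)
    then have "y - d \<in> A" unfolding A_def by (simp add: L.br_diff)
    then show "y \<in> {a + d | a d. a \<in> A \<and> d \<in> derived_algebra sc br}"
      using dS DA by (metis (mono_tags, lifting) diff_add_cancel mem_Collect_eq)
  qed simp
  show ?thesis using sub ab int sum by blast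
qed

end
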